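(* Let $(\mathcal{C},\mathbb{E},\mathfrak{s})$ satisfy (ET1), (ET2) and (ET3). If $\mathbb{F}\subseteq\mathbb{E}$ is an additive subfunctor having enough injective morphisms, then $\mathrm{Ph}(\mathbb{F})={}^{\perp_{\mathbb{E}}}(\mathbb{F}\text{-}\mathrm{inj})$.
   Context: $\mathcal{C}$ additive, $\mathbb{E}:\mathcal{C}^{\mathrm{op}}\times\mathcal{C}\to\mathrm{Ab}$ biadditive (ET1); for $\delta\in\mathbb{E}(C,A)$, $a:A\to A'$, $c:C'\to C$ put $a_\star\delta=\mathbb{E}(C,a)(\delta)$, $c^\star\delta=\mathbb{E}(c,A)(\delta)$. (ET2): $\mathfrak{s}$ is an additive realization (Nakaoka–Palu): each $\delta\in\mathbb{E}(C,A)$ is assigned an equivalence class of sequences $A\xrightarrow{x}B\xrightarrow{y}C$ (up to isomorphism of middle terms), $0$ is realized by split sequences, realization respects direct sums, and if $a_\star\delta=c^\star\delta'$ there is $b$ making the realizing sequences commute. Realized pairs are $\mathbb{E}$-triangles $A\xrightarrow{x}B\xrightarrow{y}C\overset{\delta}{\dashrightarrow}$ ($x$ an $\mathbb{E}$-inflation); such commuting triples are morphisms of $\mathbb{E}$-triangles. (ET3): given $\mathbb{E}$-triangles $A\xrightarrow{x}B\to C\overset{\delta}{\dashrightarrow}$, $A'\xrightarrow{x'}B'\to C'\overset{\delta'}{\dashrightarrow}$ and $a,b$ with $bx=x'a$, there is $c$ with $(a,b,c)$ a morphism of $\mathbb{E}$-triangles. Additive subfunctor $\mathbb{F}$: subgroups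 $\mathbb{F}(C,A)\subseteq\mathbb{E}(C,A)$ stable under $a_\star,c^\star$; $\mathbb{F}$-triangles are $\mathbb{E}$-triangles with extension in $\mathbb{F}$. $\mathrm{Ph}(\mathbb{F})$: morphisms $\varphi:X\to C$ with $\varphi^\star\delta\in\mathbb{F}(X,A)$ for all $\delta\in\mathbb{E}(C,A)$. $\mathbb{F}\text{-}\mathrm{inj}$: morphisms $i:A\to Y$ with $i_\star\delta=0$ for all $\delta\in\mathbb{F}(C,A)$. For a class $\mathcal{M}$ of morphisms, ${}^{\perp_{\mathbb{E}}}\mathcal{M}$ is the class of $g:X\to C$ with $g^\star m_\star\delta=0$ for all $m\in\mathcal{M}$, $m:A\to Y$, and all $\delta\in\mathbb{E}(C,A)$. $\mathbb{F}$ has enough injective morphisms if for every $A$ there is an $\mathbb{F}$-triangle $A\xrightarrow{e}B\to C\overset{\delta}{\dashrightarrow}$ with $e\in\mathbb{F}\text{-}\mathrm{inj}$. *)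

theory Defs
  imports "HOL-Algebra.Group"
begin

text \<open>
  Data of a triple (C, E, s): an additive category C (objects of type 'o,
  morphisms of type 'm, hom-sets hom X Y, composition cmp g f = g o f,
  identities, addition of morphisms and zero morphisms), a biadditive functor
  E : C^op x C -> Ab (groups ext C A with operation eadd C A and unit
  ezero C A; for c : C' -> C and a : A -> A', emap c a : E(C,A) -> E(C',A')),
  and a realization s, given as the relation real C A delta x y meaning that
  the sequence A --x--> B --y--> C belongs to the class s(delta).
\<close>

record ('o, 'm, 'e) ecat =
  ob    :: "'o set"
  hom   :: "'o \<Rightarrow> 'o \<Rightarrow> 'm set"
  cmp   :: "'m \<Rightarrow> 'm \<Rightarrow> 'm"
  idm   :: "'o \<Rightarrow> 'm"
  madd  :: "'m \<Rightarrow> 'm \<Rightarrow> 'm"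
  mzero :: "'o \<Rightarrow> 'o \<Rightarrow> 'm"
  ext   :: "'o \<Rightarrow> 'o \<Rightarrow> 'e set"
  eadd  :: "'o \<Rightarrow> 'o \<Rightarrow> 'e \<Rightarrow> 'e \<Rightarrow> 'e"
  ezero :: "'o \<Rightarrow> 'o \<Rightarrow> 'e"
  emap  :: "'m \<Rightarrow> 'm \<Rightarrow> 'e \<Rightarrow> 'e"
  real  :: "'o \<Rightarrow> 'o \<Rightarrow> 'e \<Rightarrow> 'm \<Rightarrow> 'm \<Rightarrow> bool"

definition homgrp :: "('o,'m,'e) ecat \<Rightarrow> 'o \<Rightarrow> 'o \<Rightarrow> 'm monoid" where
  "homgrp T X Y = \<lparr>carrier = hom T X Y, mult = madd T, one = mzero T X Y\<rparr>"

definition extgrp :: "('o,'m,'e) ecat \<Rightarrow> 'o \<Rightarrow> 'o \<Rightarrow> 'e monoid" where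
  "extgrp T C A = \<lparr>carrier = ext T C A, mult = eadd T C A, one = ezero T C A\<rparr>"

text \<open>a_* delta = E(C,a)(delta) for delta in E(C,A);  c^* delta = E(c,A)(delta).\<close>
definition push :: "('o,'m,'e) ecat \<Rightarrow> 'o \<Rightarrow> 'm \<Rightarrow> 'e \<Rightarrow> 'e" where
  "push T C a \<delta> = emap T (idm T C) a \<delta>"

definition pull :: "('o,'m,'e) ecat \<Rightarrow> 'o \<Rightarrow> 'm \<Rightarrow> 'e \<Rightarrow> 'e" where
  "pull T A c \<delta> = emap T c (idm T A) \<delta>"

definition is_category :: "('o,'m,'e) ecat \<Rightarrow> bool" where
  "is_category T \<longleftrightarrow>
     (\<forall>X\<in>ob T. \<forall>Y\<in>ob T. \<forall>X'\<in>ob T. \<forall>Y'\<in>ob T.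
        hom T X Y \<inter> hom T X' Y' \<noteq> {} \<longrightarrow> X = X' \<and> Y = Y') \<and>
     (\<forall>X\<in>ob T. idm T X \<in> hom T X X) \<and>
     (\<forall>X\<in>ob T. \<forall>Y\<in>ob T. \<forall>f\<in>hom T X Y.
        cmp T f (idm T X) = f \<and> cmp T (idm T Y) f = f) \<and>
     (\<forall>X\<in>ob T. \<forall>Y\<in>ob T. \<forall>Z\<in>ob T. \<forall>f\<in>hom T X Y. \<forall>g\<in>hom T Y Z.
        cmp T g f \<in> hom T X Z) \<and>
     (\<forall>W\<in>ob T. \<forall>X\<in>ob T. \<forall>Y\<in>ob T. \<forall>Z\<in>ob T.
        \<forall>f\<in>hom T W X. \<forall>g\<in>hom T X Y. \<forall>h\<in>hom T Y Z.
        cmp T h (cmp T g f) = cmp T (cmp T h g) f)"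

definition is_biproduct ::
  "('o,'m,'e) ecat \<Rightarrow> 'o \<Rightarrow> 'o \<Rightarrow> 'o \<Rightarrow> 'm \<Rightarrow> 'm \<Rightarrow> 'm \<Rightarrow> 'm \<Rightarrow> bool" where
  "is_biproduct T X Y S i1 i2 p1 p2 \<longleftrightarrow>
     S \<in> ob T \<and> i1 \<in> hom T X S \<and> i2 \<in> hom T Y S \<and> p1 \<in> hom T S X \<and> p2 \<in> hom T S Y \<and>
     cmp T p1 i1 = idm T X \<and> cmp T p2 i2 = idm T Y \<and>
     cmp T p1 i2 = mzero T Y X \<and> cmp T p2 i1 = mzero T X Y \<and>
     madd T (cmp T i1 p1) (cmp T i2 p2) = idm T S"

definition is_additive_category :: "('o,'m,'e) ecat \<Rightarrow> bool" where
  "is_additive_category T \<longleftrightarrow>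
     is_category T \<and>
     (\<forall>X\<in>ob T. \<forall>Y\<in>ob T. comm_group (homgrp T X Y)) \<and>
     (\<forall>W\<in>ob T. \<forall>X\<in>ob T. \<forall>Y\<in>ob T. \<forall>f\<in>hom T W X. \<forall>g\<in>hom T X Y. \<forall>g'\<in>hom T X Y.
        cmp T (madd T g g') f = madd T (cmp T g f) (cmp T g' f)) \<and>
     (\<forall>X\<in>ob T. \<forall>Y\<in>ob T. \<forall>Z\<in>ob T. \<forall>f\<in>hom T X Y. \<forall>f'\<in>hom T X Y. \<forall>g\<in>hom T Y Z.
        cmp T g (madd T f f') = madd T (cmp T g f) (cmp T g f')) \<and>
     (\<exists>Z\<in>ob T. \<forall>X\<in>ob T. hom T X Z = {mzero T X Z} \<and> hom T Z X = {mzero T Z X}) \<and>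
     (\<forall>X\<in>ob T. \<forall>Y\<in>ob T. \<exists>S i1 i2 p1 p2. is_biproduct T X Y S i1 i2 p1 p2)"

definition ET1 :: "('o,'m,'e) ecat \<Rightarrow> bool" where
  "ET1 T \<longleftrightarrow>
     (\<forall>C\<in>ob T. \<forall>A\<in>ob T. comm_group (extgrp T C A)) \<and>
     (\<forall>C\<in>ob T. \<forall>C'\<in>ob T. \<forall>A\<in>ob T. \<forall>A'\<in>ob T. \<forall>c\<in>hom T C' C. \<forall>a\<in>hom T A A'.
        (\<forall>\<delta>\<in>ext T C A. emap T c a \<delta> \<in> ext T C' A') \<and>
        (\<forall>\<delta>\<in>ext T C A. \<forall>\<delta>'\<in>ext T C A.
           emap T c a (eadd T C A \<delta> \<delta>') = eadd T C' A' (emap T c a \<delta>) (emap T c a \<delta>'))) \<and>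
     (\<forall>C\<in>ob T. \<forall>A\<in>ob T. \<forall>\<delta>\<in>ext T C A. emap T (idm T C) (idm T A) \<delta> = \<delta>) \<and>
     (\<forall>C\<in>ob T. \<forall>C1\<in>ob T. \<forall>C2\<in>ob T. \<forall>A\<in>ob T. \<forall>A1\<in>ob T. \<forall>A2\<in>ob T.
        \<forall>c1\<in>hom T C1 C. \<forall>c2\<in>hom T C2 C1. \<forall>a1\<in>hom T A A1. \<forall>a2\<in>hom T A1 A2.
        \<forall>\<delta>\<in>ext T C A.
          emap T (cmp T c1 c2) (cmp T a2 a1) \<delta> = emap T c2 a2 (emap T c1 a1 \<delta>)) \<and>
     (\<forall>C\<in>ob T. \<forall>C'\<in>ob T. \<forall>A\<in>ob T. \<forall>A'\<in>ob T.
        \<forall>c\<in>hom T C' C. \<forall>c'\<in>hom T C' C. \<forall>a\<in>hom T A A'. \<forall>\<delta>\<in>ext T C A.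
          emap T (madd T c c') a \<delta> = eadd T C' A' (emap T c a \<delta>) (emap T c' a \<delta>)) \<and>
     (\<forall>C\<in>ob T. \<forall>C'\<in>ob T. \<forall>A\<in>ob T. \<forall>A'\<in>ob T.
        \<forall>c\<in>hom T C' C. \<forall>a\<in>hom T A A'. \<forall>a'\<in>hom T A A'. \<forall>\<delta>\<in>ext T C A.
          emap T c (madd T a a') \<delta> = eadd T C' A' (emap T c a \<delta>) (emap T c a' \<delta>))"

definition is_iso :: "('o,'m,'e) ecat \<Rightarrow> 'o \<Rightarrow> 'o \<Rightarrow> 'm \<Rightarrow> bool" where
  "is_iso T B B' b \<longleftrightarrow> b \<in> hom T B B' \<and>
     (\<exists>b'\<in>hom T B' B. cmp T b' b = idm T B \<and> cmp T b b' = idm T B')"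

definition is_seq :: "('o,'m,'e) ecat \<Rightarrow> 'o \<Rightarrow> 'o \<Rightarrow> 'm \<Rightarrow> 'm \<Rightarrow> bool" where
  "is_seq T A C x y \<longleftrightarrow> (\<exists>B\<in>ob T. x \<in> hom T A B \<and> y \<in> hom T B C)"

definition seq_equiv :: "('o,'m,'e) ecat \<Rightarrow> 'o \<Rightarrow> 'o \<Rightarrow> 'm \<Rightarrow> 'm \<Rightarrow> 'm \<Rightarrow> 'm \<Rightarrow> bool" where
  "seq_equiv T A C x y x' y' \<longleftrightarrow>
     (\<exists>B\<in>ob T. \<exists>B'\<in>ob T. x \<in> hom T A B \<and> y \<in> hom T B C \<and> x' \<in> hom T A B' \<and> y' \<in> hom T B' C \<and>
        (\<exists>b. is_iso T B B' b \<and> cmp T b x = x' \<and> cmp T y' b = y))"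

definition ET2 :: "('o,'m,'e) ecat \<Rightarrow> bool" where
  "ET2 T \<longleftrightarrow>
     \<comment> \<open>each delta is assigned an equivalence class of sequences\<close>
     (\<forall>C\<in>ob T. \<forall>A\<in>ob T. \<forall>\<delta>\<in>ext T C A.
        (\<exists>x y. real T C A \<delta> x y) \<and>
        (\<forall>x y. real T C A \<delta> x y \<longrightarrow> is_seq T A C x y) \<and>
        (\<forall>x y x' y'. real T C A \<delta> x y \<longrightarrow>
            (real T C A \<delta> x' y' \<longleftrightarrow> seq_equiv T A C x y x' y'))) \<and>
     \<comment> \<open>realization condition on morphisms\<close>
     (\<forall>A\<in>ob T. \<forall>B\<in>ob T. \<forall>C\<in>ob T. \<forall>A'\<in>ob T. \<forall>B'\<in>ob T. \<forall>C'\<in>ob T.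
        \<forall>\<delta>\<in>ext T C A. \<forall>\<delta>'\<in>ext T C' A'.
        \<forall>x\<in>hom T A B. \<forall>y\<in>hom T B C. \<forall>x'\<in>hom T A' B'. \<forall>y'\<in>hom T B' C'.
        \<forall>a\<in>hom T A A'. \<forall>c\<in>hom T C C'.
          real T C A \<delta> x y \<longrightarrow> real T C' A' \<delta>' x' y' \<longrightarrow>
          push T C a \<delta> = pull T A' c \<delta>' \<longrightarrow>
          (\<exists>b\<in>hom T B B'. cmp T b x = cmp T x' a \<and> cmp T y' b = cmp T c y)) \<and>
     \<comment> \<open>0 is realized by split sequences\<close>
     (\<forall>A\<in>ob T. \<forall>C\<in>ob T. \<forall>S i1 i2 p1 p2.
        is_biproduct T A C S i1 i2 p1 p2 \<longrightarrow> real T C A (ezero T C A) i1 p2) \<and>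
     \<comment> \<open>realization respects direct sums\<close>
     (\<forall>A\<in>ob T. \<forall>B\<in>ob T. \<forall>C\<in>ob T. \<forall>A'\<in>ob T. \<forall>B'\<in>ob T. \<forall>C'\<in>ob T.
        \<forall>\<delta>\<in>ext T C A. \<forall>\<delta>'\<in>ext T C' A'.
        \<forall>x\<in>hom T A B. \<forall>y\<in>hom T B C. \<forall>x'\<in>hom T A' B'. \<forall>y'\<in>hom T B' C'.
        \<forall>SA ia1 ia2 pa1 pa2 SB ib1 ib2 pb1 pb2 SC ic1 ic2 pc1 pc2.
          is_biproduct T A A' SA ia1 ia2 pa1 pa2 \<longrightarrow>
          is_biproduct T B B' SB ib1 ib2 pb1 pb2 \<longrightarrow>
          is_biproduct T C C' SC ic1 ic2 pc1 pc2 \<longrightarrow>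
          real T C A \<delta> x y \<longrightarrow> real T C' A' \<delta>' x' y' \<longrightarrow>
          real T SC SA
            (eadd T SC SA (emap T pc1 ia1 \<delta>) (emap T pc2 ia2 \<delta>'))
            (madd T (cmp T ib1 (cmp T x pa1)) (cmp T ib2 (cmp T x' pa2)))
            (madd T (cmp T ic1 (cmp T y pb1)) (cmp T ic2 (cmp T y' pb2))))"

definition ET3 :: "('o,'m,'e) ecat \<Rightarrow> bool" where
  "ET3 T \<longleftrightarrow>
     (\<forall>A\<in>ob T. \<forall>B\<in>ob T. \<forall>C\<in>ob T. \<forall>A'\<in>ob T. \<forall>B'\<in>ob T. \<forall>C'\<in>ob T.
        \<forall>\<delta>\<in>ext T C A. \<forall>\<delta>'\<in>ext T C' A'.
        \<forall>x\<in>hom T A B. \<forall>y\<in>hom T B C. \<forall>x'\<in>hom T A' B'. \<forall>y'\<in>hom T B' C'.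
        \<forall>a\<in>hom T A A'. \<forall>b\<in>hom T B B'.
          real T C A \<delta> x y \<longrightarrow> real T C' A' \<delta>' x' y' \<longrightarrow>
          cmp T b x = cmp T x' a \<longrightarrow>
          (\<exists>c\<in>hom T C C'. cmp T c y = cmp T y' b \<and> push T C a \<delta> = pull T A' c \<delta>'))"

definition ET123 :: "('o,'m,'e) ecat \<Rightarrow> bool" where
  "ET123 T \<longleftrightarrow> is_additive_category T \<and> ET1 T \<and> ET2 T \<and> ET3 T"

definition additive_subfunctor ::
  "('o,'m,'e) ecat \<Rightarrow> ('o \<Rightarrow> 'o \<Rightarrow> 'e set) \<Rightarrow> bool" where
  "additive_subfunctor T F \<longleftrightarrow>
     (\<forall>C\<in>ob T. \<forall>A\<in>ob T. subgroup (F C A) (extgrp T C A)) \<and>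
     (\<forall>C\<in>ob T. \<forall>A\<in>ob T. \<forall>A'\<in>ob T. \<forall>a\<in>hom T A A'. \<forall>\<delta>\<in>F C A. push T C a \<delta> \<in> F C A') \<and>
     (\<forall>C\<in>ob T. \<forall>C'\<in>ob T. \<forall>A\<in>ob T. \<forall>c\<in>hom T C' C. \<forall>\<delta>\<in>F C A. pull T A c \<delta> \<in> F C' A)"

definition Ph :: "('o,'m,'e) ecat \<Rightarrow> ('o \<Rightarrow> 'o \<Rightarrow> 'e set) \<Rightarrow> 'm set" where
  "Ph T F = {\<phi>. \<exists>X\<in>ob T. \<exists>C\<in>ob T. \<phi> \<in> hom T X C \<and>
                 (\<forall>A\<in>ob T. \<forall>\<delta>\<in>ext T C A. pull T A \<phi> \<delta> \<in> F X A)}"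

definition Finj :: "('o,'m,'e) ecat \<Rightarrow> ('o \<Rightarrow> 'o \<Rightarrow> 'e set) \<Rightarrow> 'm set" where
  "Finj T F = {i. \<exists>A\<in>ob T. \<exists>Y\<in>ob T. i \<in> hom T A Y \<and>
                 (\<forall>C\<in>ob T. \<forall>\<delta>\<in>F C A. push T C i \<delta> = ezero T C Y)}"

definition perpE :: "('o,'m,'e) ecat \<Rightarrow> 'm set \<Rightarrow> 'm set" where
  "perpE T M = {g. \<exists>X\<in>ob T. \<exists>C\<in>ob T. g \<in> hom T X C \<and>
                 (\<forall>m\<in>M. \<forall>A\<in>ob T. \<forall>Y\<in>ob T. m \<in> hom T A Y \<longrightarrow>
                    (\<forall>\<delta>\<in>ext T C A. pull T Y g (push T C m \<delta>) = ezero T X Y))}"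

definition enough_inj_morphisms ::
  "('o,'m,'e) ecat \<Rightarrow> ('o \<Rightarrow> 'o \<Rightarrow> 'e set) \<Rightarrow> bool" where
  "enough_inj_morphisms T F \<longleftrightarrow>
     (\<forall>A\<in>ob T. \<exists>B\<in>ob T. \<exists>C\<in>ob T. \<exists>e\<in>hom T A B. \<exists>y\<in>hom T B C. \<exists>\<delta>\<in>F C A.
        real T C A \<delta> e y \<and> e \<in> Finj T F)"

end

theory Submission
  imports Defs
begin

lemma cat_D:
  assumes "is_category T"
  shows cat_uniq: "\<And>X Y X' Y' f. X \<in> ob T \<Longrightarrow> Y \<in> ob T \<Longrightarrow> X' \<in> ob T \<Longrightarrow> Y' \<in> ob T \<Longrightarrow>
     f \<in> ecat.hom T X Y \<Longrightarrow> f \<in> ecat.hom T X' Y' \<Longrightarrow> X = X' \<and> Y = Y'"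
    and cat_id: "\<And>X. X \<in> ob T \<Longrightarrow> idm T X \<in> ecat.hom T X X"
    and cat_idr: "\<And>X Y f. X \<in> ob T \<Longrightarrow> Y \<in> ob T \<Longrightarrow> f \<in> ecat.hom T X Y \<Longrightarrow> cmp T f (idm T X) = f"
    and cat_idl: "\<And>X Y f. X \<in> ob T \<Longrightarrow> Y \<in> ob T \<Longrightarrow> f \<in> ecat.hom T X Y \<Longrightarrow> cmp T (idm T Y) f = f"
    and cat_comp: "\<And>X Y Z f g. X \<in> ob T \<Longrightarrow> Y \<in> ob T \<Longrightarrow> Z \<in> ob T \<Longrightarrow> f \<in> ecat.hom T X Y \<Longrightarrow>
         g \<in> ecat.hom T Y Z \<Longrightarrow> cmp T g f \<in> ecat.hom T X Z"
    and cat_assoc: "\<And>W X Y Z f g h. W \<in> ob T \<Longrightarrow> X \<in> ob T \<Longrightarrow> Y \<in> ob T \<Longrightarrow> Z \<in> ob T \<Longrightarrow>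
        f \<in> ecat.hom T W X \<Longrightarrow> g \<in> ecat.hom T X Y \<Longrightarrow> h \<in> ecat.hom T Y Z \<Longrightarrow>
        cmp T h (cmp T g f) = cmp T (cmp T h g) f"
proof -
  note a = assms[unfolded is_category_def]
  show "\<And>X Y X' Y' f. X \<in> ob T \<Longrightarrow> Y \<in> ob T \<Longrightarrow> X' \<in> ob T \<Longrightarrow> Y' \<in> ob T \<Longrightarrow>
     f \<in> ecat.hom T X Y \<Longrightarrow> f \<in> ecat.hom T X' Y' \<Longrightarrow> X = X' \<and> Y = Y'"
  proof -
    fix X Y X' Y' f assume h: "X \<in> ob T" "Y \<in> ob T" "X' \<in> ob T" "Y' \<in> ob T"
       "f \<in> ecat.hom T X Y" "f \<in> ecat.hom T X' Y'"
    have "ecat.hom T X Y \<inter> ecat.hom T X' Y' \<noteq> {}" using h by blast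
    with conjunct1[OF a] h show "X = X' \<and> Y = Y'" by blast
  qed
  show "\<And>X. X \<in> ob T \<Longrightarrow> idm T X \<in> ecat.hom T X X" using a by blast
  show "\<And>X Y f. X \<in> ob T \<Longrightarrow> Y \<in> ob T \<Longrightarrow> f \<in> ecat.hom T X Y \<Longrightarrow> cmp T f (idm T X) = f" using a by blast
  show "\<And>X Y f. X \<in> ob T \<Longrightarrow> Y \<in> ob T \<Longrightarrow> f \<in> ecat.hom T X Y \<Longrightarrow> cmp T (idm T Y) f = f" using a by blast
  show "\<And>X Y Z f g. X \<in> ob T \<Longrightarrow> Y \<in> ob T \<Longrightarrow> Z \<in> ob T \<Longrightarrow> f \<in> ecat.hom T X Y \<Longrightarrow>
         g \<in> ecat.hom T Y Z \<Longrightarrow> cmp T g f \<in> ecat.hom T X Z" using a by blast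
  show "\<And>W X Y Z f g h. W \<in> ob T \<Longrightarrow> X \<in> ob T \<Longrightarrow> Y \<in> ob T \<Longrightarrow> Z \<in> ob T \<Longrightarrow>
        f \<in> ecat.hom T W X \<Longrightarrow> g \<in> ecat.hom T X Y \<Longrightarrow> h \<in> ecat.hom T Y Z \<Longrightarrow>
        cmp T h (cmp T g f) = cmp T (cmp T h g) f"
  proof -
    fix W X Y Z f g h assume "W \<in> ob T" "X \<in> ob T" "Y \<in> ob T" "Z \<in> ob T"
        "f \<in> ecat.hom T W X" "g \<in> ecat.hom T X Y" "h \<in> ecat.hom T Y Z"
    moreover have "\<forall>W\<in>ob T. \<forall>X\<in>ob T. \<forall>Y\<in>ob T. \<forall>Z\<in>ob T.
        \<forall>f\<in>ecat.hom T W X. \<forall>g\<in>ecat.hom T X Y. \<forall>h\<in>ecat.hom T Y Z.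
        cmp T h (cmp T g f) = cmp T (cmp T h g) f" using a by (elim conjE)
    ultimately show "cmp T h (cmp T g f) = cmp T (cmp T h g) f" by blast
  qed
qed

lemma ET1_D:
  assumes "ET1 T"
  shows ET1_closed: "\<And>C C' A A' c a \<delta>. C\<in>ob T \<Longrightarrow> C'\<in>ob T \<Longrightarrow> A\<in>ob T \<Longrightarrow> A'\<in>ob T \<Longrightarrow>
      c\<in>ecat.hom T C' C \<Longrightarrow> a\<in>ecat.hom T A A' \<Longrightarrow> \<delta>\<in>ext T C A \<Longrightarrow> emap T c a \<delta> \<in> ext T C' A'"
  and ET1_id: "\<And>C A \<delta>. C\<in>ob T \<Longrightarrow> A\<in>ob T \<Longrightarrow> \<delta>\<in>ext T C A \<Longrightarrow> emap T (idm T C) (idm T A) \<delta> = \<delta>"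
  and ET1_comp: "\<And>C C1 C2 A A1 A2 c1 c2 a1 a2 \<delta>. C\<in>ob T \<Longrightarrow> C1\<in>ob T \<Longrightarrow> C2\<in>ob T \<Longrightarrow> A\<in>ob T \<Longrightarrow>
        A1\<in>ob T \<Longrightarrow> A2\<in>ob T \<Longrightarrow>
        c1\<in>ecat.hom T C1 C \<Longrightarrow> c2\<in>ecat.hom T C2 C1 \<Longrightarrow> a1\<in>ecat.hom T A A1 \<Longrightarrow> a2\<in>ecat.hom T A1 A2 \<Longrightarrow>
        \<delta>\<in>ext T C A \<Longrightarrow>
          emap T (cmp T c1 c2) (cmp T a2 a1) \<delta> = emap T c2 a2 (emap T c1 a1 \<delta>)"
  and ET1_grp: "\<And>C A. C\<in>ob T \<Longrightarrow> A\<in>ob T \<Longrightarrow> comm_group (extgrp T C A)"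
proof -
  note a = assms[unfolded ET1_def]
  note a1 = conjunct1[OF a]
  note a2 = conjunct1[OF conjunct2[OF a]]
  note a3 = conjunct1[OF conjunct2[OF conjunct2[OF a]]]
  note a4 = conjunct1[OF conjunct2[OF conjunct2[OF conjunct2[OF a]]]]
  show "\<And>C C' A A' c a \<delta>. C\<in>ob T \<Longrightarrow> C'\<in>ob T \<Longrightarrow> A\<in>ob T \<Longrightarrow> A'\<in>ob T \<Longrightarrow>
      c\<in>ecat.hom T C' C \<Longrightarrow> a\<in>ecat.hom T A A' \<Longrightarrow> \<delta>\<in>ext T C A \<Longrightarrow> emap T c a \<delta> \<in> ext T C' A'"
    using a2 by blast
  show "\<And>C A \<delta>. C\<in>ob T \<Longrightarrow> A\<in>ob T \<Longrightarrow> \<delta>\<in>ext T C A \<Longrightarrow> emap T (idm T C) (idm T A) \<delta> = \<delta>"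
    using a3 by blast
  show "\<And>C C1 C2 A A1 A2 c1 c2 a1 a2 \<delta>. C\<in>ob T \<Longrightarrow> C1\<in>ob T \<Longrightarrow> C2\<in>ob T \<Longrightarrow> A\<in>ob T \<Longrightarrow>
        A1\<in>ob T \<Longrightarrow> A2\<in>ob T \<Longrightarrow>
        c1\<in>ecat.hom T C1 C \<Longrightarrow> c2\<in>ecat.hom T C2 C1 \<Longrightarrow> a1\<in>ecat.hom T A A1 \<Longrightarrow> a2\<in>ecat.hom T A1 A2 \<Longrightarrow>
        \<delta>\<in>ext T C A \<Longrightarrow>
          emap T (cmp T c1 c2) (cmp T a2 a1) \<delta> = emap T c2 a2 (emap T c1 a1 \<delta>)"
    using a4 by blast
  show "\<And>C A. C\<in>ob T \<Longrightarrow> A\<in>ob T \<Longrightarrow> comm_group (extgrp T C A)" using a1 by blast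
qed

lemma ET2_D:
  assumes "ET2 T"
  shows ET2_ex: "\<And>C A \<delta>. C\<in>ob T \<Longrightarrow> A\<in>ob T \<Longrightarrow> \<delta>\<in>ext T C A \<Longrightarrow> \<exists>x y. real T C A \<delta> x y"
  and ET2_seq: "\<And>C A \<delta> x y. C\<in>ob T \<Longrightarrow> A\<in>ob T \<Longrightarrow> \<delta>\<in>ext T C A \<Longrightarrow> real T C A \<delta> x y \<Longrightarrow> is_seq T A C x y"
  and ET2_morph: "\<And>A B C A' B' C' \<delta> \<delta>' x y x' y' a c. A\<in>ob T \<Longrightarrow> B\<in>ob T \<Longrightarrow> C\<in>ob T \<Longrightarrow>
        A'\<in>ob T \<Longrightarrow> B'\<in>ob T \<Longrightarrow> C'\<in>ob T \<Longrightarrow>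
        \<delta>\<in>ext T C A \<Longrightarrow> \<delta>'\<in>ext T C' A' \<Longrightarrow>
        x\<in>ecat.hom T A B \<Longrightarrow> y\<in>ecat.hom T B C \<Longrightarrow> x'\<in>ecat.hom T A' B' \<Longrightarrow> y'\<in>ecat.hom T B' C' \<Longrightarrow>
        a\<in>ecat.hom T A A' \<Longrightarrow> c\<in>ecat.hom T C C' \<Longrightarrow>
          real T C A \<delta> x y \<Longrightarrow> real T C' A' \<delta>' x' y' \<Longrightarrow>
          push T C a \<delta> = pull T A' c \<delta>' \<Longrightarrow>
          (\<exists>b\<in>ecat.hom T B B'. cmp T b x = cmp T x' a \<and> cmp T y' b = cmp T c y)"
  and ET2_zero: "\<And>A C S i1 i2 p1 p2. A\<in>ob T \<Longrightarrow> C\<in>ob T \<Longrightarrow>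
        is_biproduct T A C S i1 i2 p1 p2 \<Longrightarrow> real T C A (ezero T C A) i1 p2"
proof -
  note a = assms[unfolded ET2_def]
  note a1 = conjunct1[OF a]
  note a2 = conjunct1[OF conjunct2[OF a]]
  note a3 = conjunct1[OF conjunct2[OF conjunct2[OF a]]]
  show "\<And>C A \<delta>. C\<in>ob T \<Longrightarrow> A\<in>ob T \<Longrightarrow> \<delta>\<in>ext T C A \<Longrightarrow> \<exists>x y. real T C A \<delta> x y"
    using a1 by blast
  show "\<And>C A \<delta> x y. C\<in>ob T \<Longrightarrow> A\<in>ob T \<Longrightarrow> \<delta>\<in>ext T C A \<Longrightarrow> real T C A \<delta> x y \<Longrightarrow> is_seq T A C x y"
    using a1 by blast
  show "\<And>A B C A' B' C' \<delta> \<delta>' x y x' y' a c. A\<in>ob T \<Longrightarrow> B\<in>ob T \<Longrightarrow> C\<in>ob T \<Longrightarrow>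
        A'\<in>ob T \<Longrightarrow> B'\<in>ob T \<Longrightarrow> C'\<in>ob T \<Longrightarrow>
        \<delta>\<in>ext T C A \<Longrightarrow> \<delta>'\<in>ext T C' A' \<Longrightarrow>
        x\<in>ecat.hom T A B \<Longrightarrow> y\<in>ecat.hom T B C \<Longrightarrow> x'\<in>ecat.hom T A' B' \<Longrightarrow> y'\<in>ecat.hom T B' C' \<Longrightarrow>
        a\<in>ecat.hom T A A' \<Longrightarrow> c\<in>ecat.hom T C C' \<Longrightarrow>
          real T C A \<delta> x y \<Longrightarrow> real T C' A' \<delta>' x' y' \<Longrightarrow>
          push T C a \<delta> = pull T A' c \<delta>' \<Longrightarrow>
          (\<exists>b\<in>ecat.hom T B B'. cmp T b x = cmp T x' a \<and> cmp T y' b = cmp T c y)"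
  proof -
    fix A B C A' B' C' \<delta> \<delta>' x y x' y' a c
    assume h: "A\<in>ob T" "B\<in>ob T" "C\<in>ob T" "A'\<in>ob T" "B'\<in>ob T" "C'\<in>ob T"
        "\<delta>\<in>ext T C A" "\<delta>'\<in>ext T C' A'"
        "x\<in>ecat.hom T A B" "y\<in>ecat.hom T B C" "x'\<in>ecat.hom T A' B'" "y'\<in>ecat.hom T B' C'"
        "a\<in>ecat.hom T A A'" "c\<in>ecat.hom T C C'"
        "real T C A \<delta> x y" "real T C' A' \<delta>' x' y'" "push T C a \<delta> = pull T A' c \<delta>'"
    show "\<exists>b\<in>ecat.hom T B B'. cmp T b x = cmp T x' a \<and> cmp T y' b = cmp T c y"
      using a2[rule_format, OF h(1-16)] h(17) by blast
  qed
  show "\<And>A C S i1 i2 p1 p2. A\<in>ob T \<Longrightarrow> C\<in>ob T \<Longrightarrow>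
        is_biproduct T A C S i1 i2 p1 p2 \<Longrightarrow> real T C A (ezero T C A) i1 p2"
    using a3 by blast
qed

lemma ET3_rule:
  assumes "ET3 T" "A\<in>ob T" "B\<in>ob T" "C\<in>ob T" "A'\<in>ob T" "B'\<in>ob T" "C'\<in>ob T"
        "\<delta>\<in>ext T C A" "\<delta>'\<in>ext T C' A'"
        "x\<in>ecat.hom T A B" "y\<in>ecat.hom T B C" "x'\<in>ecat.hom T A' B'" "y'\<in>ecat.hom T B' C'"
        "a\<in>ecat.hom T A A'" "b\<in>ecat.hom T B B'"
        "real T C A \<delta> x y" "real T C' A' \<delta>' x' y'" "cmp T b x = cmp T x' a"
  shows "\<exists>c\<in>ecat.hom T C C'. cmp T c y = cmp T y' b \<and> push T C a \<delta> = pull T A' c \<delta>'"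
  using assms(1)[unfolded ET3_def, rule_format, OF assms(2-17)] assms(18) by blast

lemma add_biprod:
  assumes "is_additive_category T" "X \<in> ob T" "Y \<in> ob T"
  shows "\<exists>S i1 i2 p1 p2. is_biproduct T X Y S i1 i2 p1 p2"
proof -
  note a = assms(1)[unfolded is_additive_category_def]
  note a5 = conjunct2[OF conjunct2[OF conjunct2[OF conjunct2[OF conjunct2[OF a]]]]]
  show ?thesis using a5 assms(2,3) by blast
qed

lemma ezero_in:
  assumes "ET1 T" "C \<in> ob T" "A \<in> ob T"
  shows "ezero T C A \<in> ext T C A"
proof -
  have "comm_group (extgrp T C A)" using ET1_grp[OF assms] .
  then have "monoid (extgrp T C A)" by (simp add: comm_group_def comm_monoid_def group_def)
  then have "one (extgrp T C A) \<in> carrier (extgrp T C A)" by (rule monoid.one_closed)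
  then show ?thesis by (simp add: extgrp_def)
qed

lemma pull_push:
  assumes e1: "ET1 T" and cat: "is_category T" and ob: "X \<in> ob T" "C \<in> ob T" "A \<in> ob T" "Y \<in> ob T"
    and g: "g \<in> ecat.hom T X C" and m: "m \<in> ecat.hom T A Y" and d: "\<delta> \<in> ext T C A"
  shows "pull T Y g (push T C m \<delta>) = push T X m (pull T A g \<delta>)"
proof -
  have "emap T g (idm T Y) (emap T (idm T C) m \<delta>) = emap T (cmp T (idm T C) g) (cmp T (idm T Y) m) \<delta>"
    by (rule ET1_comp[OF e1 ob(2) ob(2) ob(1) ob(3) ob(4) ob(4) cat_id[OF cat ob(2)] g m cat_id[OF cat ob(4)] d, symmetric])
  moreover have "emap T (idm T X) m (emap T g (idm T A) \<delta>) = emap T (cmp T g (idm T X)) (cmp T m (idm T A)) \<delta>"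
    by (rule ET1_comp[OF e1 ob(2) ob(1) ob(1) ob(3) ob(3) ob(4) g cat_id[OF cat ob(1)] cat_id[OF cat ob(3)] m d, symmetric])
  moreover have "cmp T (idm T C) g = g" "cmp T g (idm T X) = g"
    using cat_idl[OF cat ob(1,2) g] cat_idr[OF cat ob(1,2) g] .
  moreover have "cmp T (idm T Y) m = m" "cmp T m (idm T A) = m"
    using cat_idl[OF cat ob(3,4) m] cat_idr[OF cat ob(3,4) m] .
  ultimately show ?thesis unfolding pull_def push_def by simp
qed

theorem proposition3p12:
  fixes T :: "('o, 'm, 'e) ecat" and F :: "'o \<Rightarrow> 'o \<Rightarrow> 'e set"
  assumes "ET123 T"
    and "additive_subfunctor T F"
    and "enough_inj_morphisms T F"
  shows "Ph T F = perpE T (Finj T F)"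
proof
  have add: "is_additive_category T" and e1: "ET1 T" and e2: "ET2 T" and e3: "ET3 T"
    using assms(1) unfolding ET123_def by auto
  have cat: "is_category T" using add unfolding is_additive_category_def by (rule conjunct1)
  note sf = assms(2)[unfolded additive_subfunctor_def]
  have pullF: "\<And>C C' A c \<delta>. C\<in>ob T \<Longrightarrow> C'\<in>ob T \<Longrightarrow> A\<in>ob T \<Longrightarrow> c\<in>ecat.hom T C' C \<Longrightarrow> \<delta>\<in>F C A
      \<Longrightarrow> pull T A c \<delta> \<in> F C' A"
    using conjunct2[OF conjunct2[OF sf]] by blast
  have sgF: "\<And>C A. C\<in>ob T \<Longrightarrow> A\<in>ob T \<Longrightarrow> subgroup (F C A) (extgrp T C A)"
    using conjunct1[OF sf] by blast
  show "Ph T F \<subseteq> perpE T (Finj T F)"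
  proof
    fix \<phi> assume "\<phi> \<in> Ph T F"
    then obtain X C where ob: "X \<in> ob T" "C \<in> ob T" and g: "\<phi> \<in> ecat.hom T X C"
      and ph: "\<forall>A\<in>ob T. \<forall>\<delta>\<in>ext T C A. pull T A \<phi> \<delta> \<in> F X A" unfolding Ph_def by blast
    have "\<forall>m\<in>Finj T F. \<forall>A\<in>ob T. \<forall>Y\<in>ob T. m \<in> ecat.hom T A Y \<longrightarrow>
                    (\<forall>\<delta>\<in>ext T C A. pull T Y \<phi> (push T C m \<delta>) = ezero T X Y)"
    proof (intro ballI impI)
      fix m A Y \<delta> assume m: "m \<in> Finj T F" and AY: "A \<in> ob T" "Y \<in> ob T" and mh: "m \<in> ecat.hom T A Y"
        and d: "\<delta> \<in> ext T C A"
      from m obtain A0 Y0 where o0: "A0 \<in> ob T" "Y0 \<in> ob T" and m0: "m \<in> ecat.hom T A0 Y0"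
        and inj: "\<forall>C\<in>ob T. \<forall>\<delta>\<in>F C A0. push T C m \<delta> = ezero T C Y0" unfolding Finj_def by blast
      have "A0 = A \<and> Y0 = Y" by (rule cat_uniq[OF cat o0 AY m0 mh])
      with inj have inj': "\<forall>C\<in>ob T. \<forall>\<delta>\<in>F C A. push T C m \<delta> = ezero T C Y" by simp
      have "pull T Y \<phi> (push T C m \<delta>) = push T X m (pull T A \<phi> \<delta>)"
        by (rule pull_push[OF e1 cat ob AY g mh d])
      also have "\<dots> = ezero T X Y" using inj' ph ob AY d by blast
      finally show "pull T Y \<phi> (push T C m \<delta>) = ezero T X Y" .
    qed
    then show "\<phi> \<in> perpE T (Finj T F)" unfolding perpE_def using ob g by blast
  qed
  show "perpE T (Finj T F) \<subseteq> Ph T F"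
  proof
    fix g assume "g \<in> perpE T (Finj T F)"
    then obtain X C where ob: "X \<in> ob T" "C \<in> ob T" and g: "g \<in> ecat.hom T X C"
      and pp: "\<forall>m\<in>Finj T F. \<forall>A\<in>ob T. \<forall>Y\<in>ob T. m \<in> ecat.hom T A Y \<longrightarrow>
                    (\<forall>\<delta>\<in>ext T C A. pull T Y g (push T C m \<delta>) = ezero T X Y)"
      unfolding perpE_def by blast
    have "\<forall>A\<in>ob T. \<forall>\<delta>\<in>ext T C A. pull T A g \<delta> \<in> F X A"
    proof (intro ballI)
      fix A \<delta> assume A: "A \<in> ob T" and d: "\<delta> \<in> ext T C A"
      obtain B D e y \<rho> where B: "B \<in> ob T" and D: "D \<in> ob T" and e: "e \<in> ecat.hom T A B"
        and y: "y \<in> ecat.hom T B D" and \<rho>: "\<rho> \<in> F D A" and r\<rho>: "real T D A \<rho> e y" and ei: "e \<in> Finj T F"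
        using assms(3) A unfolding enough_inj_morphisms_def by blast
      have \<rho>E: "\<rho> \<in> ext T D A" using subgroup.subset[OF sgF[OF D A]] \<rho> by (auto simp: extgrp_def)
      define \<theta> where "\<theta> = pull T A g \<delta>"
      have \<theta>E: "\<theta> \<in> ext T X A" unfolding \<theta>_def pull_def
        by (rule ET1_closed[OF e1 ob(2) ob(1) A A g cat_id[OF cat A] d])
      have "pull T B g (push T C e \<delta>) = ezero T X B" using pp ei A B e d by blast
      then have z0: "push T X e \<theta> = ezero T X B"
        using pull_push[OF e1 cat ob A B g e d] unfolding \<theta>_def by simp
      obtain x z where rt: "real T X A \<theta> x z" using ET2_ex[OF e2 ob(1) A \<theta>E] by blast
      have "is_seq T A X x z" by (rule ET2_seq[OF e2 ob(1) A \<theta>E rt])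
      then obtain M where M: "M \<in> ob T" "x \<in> ecat.hom T A M" "z \<in> ecat.hom T M X" unfolding is_seq_def by blast
      obtain S i1 i2 p1 p2 where bp: "is_biproduct T B X S i1 i2 p1 p2"
        using add_biprod[OF add B ob(1)] by blast
      then have S: "S \<in> ob T" "i1 \<in> ecat.hom T B S" "i2 \<in> ecat.hom T X S" "p1 \<in> ecat.hom T S B" "p2 \<in> ecat.hom T S X"
        "cmp T p1 i1 = idm T B" unfolding is_biproduct_def by auto
      have r0: "real T X B (ezero T X B) i1 p2" by (rule ET2_zero[OF e2 B ob(1) bp])
      have zE: "ezero T X B \<in> ext T X B" using ezero_in[OF e1 ob(1) B] .
      have pz: "pull T B (idm T X) (ezero T X B) = ezero T X B"
        unfolding pull_def by (rule ET1_id[OF e1 ob(1) B zE])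
      have "push T X e \<theta> = pull T B (idm T X) (ezero T X B)" using z0 pz by simp
      from ET2_morph[OF e2 A M(1) ob(1) B S(1) ob(1) \<theta>E zE M(2) M(3) S(2) S(5) e cat_id[OF cat ob(1)] rt r0 this]
      obtain b where b: "b \<in> ecat.hom T M S" "cmp T b x = cmp T i1 e" by blast
      have p1b: "cmp T p1 b \<in> ecat.hom T M B" by (rule cat_comp[OF cat M(1) S(1) B b(1) S(4)])
      have "cmp T (cmp T p1 b) x = cmp T p1 (cmp T b x)"
        by (rule cat_assoc[OF cat A M(1) S(1) B M(2) b(1) S(4), symmetric])
      also have "\<dots> = cmp T p1 (cmp T i1 e)" using b by simp
      also have "\<dots> = cmp T (cmp T p1 i1) e" by (rule cat_assoc[OF cat A B S(1) B e S(2) S(4)])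
      also have "\<dots> = e" using S(6) cat_idl[OF cat A B e] by simp
      also have "\<dots> = cmp T e (idm T A)" using cat_idr[OF cat A B e] by simp
      finally have comm: "cmp T (cmp T p1 b) x = cmp T e (idm T A)" .
      from ET3_rule[OF e3 A M(1) ob(1) A B D \<theta>E \<rho>E M(2) M(3) e y cat_id[OF cat A] p1b rt r\<rho> comm]
      obtain h where h: "h \<in> ecat.hom T X D" and hp: "push T X (idm T A) \<theta> = pull T A h \<rho>" by blast
      have "push T X (idm T A) \<theta> = \<theta>" unfolding push_def by (rule ET1_id[OF e1 ob(1) A \<theta>E])
      with hp have "\<theta> = pull T A h \<rho>" by simp
      moreover have "pull T A h \<rho> \<in> F X A" by (rule pullF[OF D ob(1) A h \<rho>])
      ultimately show "pull T A g \<delta> \<in> F X A" unfolding \<theta>_def by simp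
    qed
    then show "g \<in> Ph T F" unfolding Ph_def using ob g by blast
  qed
qed

end
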